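(* For any formula $A$, the contraction rules $\mathsf{cl}_A$: from $\Gamma,A,A\Rightarrow\Delta$ infer $\Gamma,A\Rightarrow\Delta$, and $\mathsf{cr}_A$: from $\Gamma\Rightarrow A,A,\Delta$ infer $\Gamma\Rightarrow A,\Delta$ (for arbitrary finite multisets $\Gamma,\Delta$) are admissible in $\mathsf{Grz}_\infty$; that is, whenever the premise is provable in $\mathsf{Grz}_\infty$, so is the conclusion.
   Context: Formulas are built from $\bot$ and atomic propositions using $\to$ and $\Box$. A sequent is $\Gamma\Rightarrow\Delta$ with $\Gamma,\Delta$ finite multisets of formulas; $\Box\Pi$ denotes the multiset $\{\Box B:B\in\Pi\}$. The calculus $\mathsf{Grz}_\infty$ (without cut) has initial sequents $\Gamma,p\Rightarrow p,\Delta$ ($p$ atomic) and $\Gamma,\bot\Rightarrow\Delta$, and rules: $(\to_L)$ from $\Gamma,B\Rightarrow\Delta$ and $\Gamma\Rightarrow A,\Delta$ infer $\Gamma,A\to B\Rightarrow\Delta$; $(\to_R)$ from $\Gamma,A\Rightarrow B,\Delta$ infer $\Gamma\Rightarrow A\to B,\Delta$; $(\mathsf{refl})$ from $\Gamma,B,\Box B\Rightarrow\Delta$ infer $\Gamma,\Box B\Rightarrow\Delta$; $(\Box)$ from left premise $\Gamma,\Box\Pi\Rightarrow A,\Delta$ and right premise $\Box\Pi\Rightarrow A$ infer $\Gamma,\Box\Pi\Rightarrow\Box A,\Delta$. An $\infty$-proof is a possibly infinite tree of sequents built by these rules, with leaves labelled by initial sequents, in which every infinite branch passes through a right premise of $(\Box)$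 infinitely often; a sequent is provable if it labels the root of an $\infty$-proof. *)

theory Defs
  imports "HOL-Library.Multiset"
begin

datatype fm = Bot | At nat | Imp fm fm | Box fm

type_synonym sequent = "fm multiset \<times> fm multiset"

text \<open>Rule labels. For BoxR, child 0 is the left premise, child 1 the right premise.\<close>
datatype rl = Ax | ImpL | ImpR | Refl | BoxR

codatatype ptree = PNode (root: sequent) (rule: rl) (subs: "ptree list")

fun step_ok :: "sequent \<Rightarrow> rl \<Rightarrow> sequent list \<Rightarrow> bool" where
  "step_ok S Ax ps \<longleftrightarrow> ps = [] \<and>
     ((\<exists>\<Gamma> \<Delta> p. S = (add_mset (At p) \<Gamma>, add_mset (At p) \<Delta>)) \<or>
      (\<exists>\<Gamma> \<Delta>. S = (add_mset Bot \<Gamma>, \<Delta>)))"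
| "step_ok S ImpL ps \<longleftrightarrow> (\<exists>\<Gamma> \<Delta> A B. S = (add_mset (Imp A B) \<Gamma>, \<Delta>) \<and>
     ps = [(add_mset B \<Gamma>, \<Delta>), (\<Gamma>, add_mset A \<Delta>)])"
| "step_ok S ImpR ps \<longleftrightarrow> (\<exists>\<Gamma> \<Delta> A B. S = (\<Gamma>, add_mset (Imp A B) \<Delta>) \<and>
     ps = [(add_mset A \<Gamma>, add_mset B \<Delta>)])"
| "step_ok S Refl ps \<longleftrightarrow> (\<exists>\<Gamma> \<Delta> B. S = (add_mset (Box B) \<Gamma>, \<Delta>) \<and>
     ps = [(add_mset B (add_mset (Box B) \<Gamma>), \<Delta>)])"
| "step_ok S BoxR ps \<longleftrightarrow> (\<exists>\<Gamma> \<Pi> \<Delta> A. S = (\<Gamma> + image_mset Box \<Pi>, add_mset (Box A) \<Delta>) \<and>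
     ps = [(\<Gamma> + image_mset Box \<Pi>, add_mset A \<Delta>), (image_mset Box \<Pi>, {#A#})])"

coinductive locally_correct :: "ptree \<Rightarrow> bool" where
  "step_ok (root t) (rule t) (map root (subs t)) \<Longrightarrow>
   (\<forall>s \<in> set (subs t). locally_correct s) \<Longrightarrow> locally_correct t"

definition is_branch :: "ptree \<Rightarrow> (nat \<Rightarrow> ptree) \<Rightarrow> (nat \<Rightarrow> nat) \<Rightarrow> bool" where
  "is_branch t f d \<longleftrightarrow> f 0 = t \<and>
     (\<forall>i. d i < length (subs (f i)) \<and> f (Suc i) = subs (f i) ! d i)"

definition inf_proof :: "ptree \<Rightarrow> bool" where
  "inf_proof t \<longleftrightarrow> locally_correct t \<and>
     (\<forall>f d. is_branch t f d \<longrightarrow> (\<forall>n. \<exists>i\<ge>n. rule (f i) = BoxR \<and> d i = 1))"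

definition provable :: "sequent \<Rightarrow> bool" where
  "provable S \<longleftrightarrow> (\<exists>t. inf_proof t \<and> root t = S)"

end

theory Submission
  imports Defs
begin

inductive WF :: "(fm multiset \<Rightarrow> fm multiset \<Rightarrow> bool) \<Rightarrow> fm multiset \<Rightarrow> fm multiset \<Rightarrow> bool"
  for X where
  wax1: "WF X (add_mset (At p) G) (add_mset (At p) D)"
| wax2: "WF X (add_mset Bot G) D"
| wimpl: "WF X (add_mset B G) D \<Longrightarrow> WF X G (add_mset A D) \<Longrightarrow> WF X (add_mset (Imp A B) G) D"
| wimpr: "WF X (add_mset A G) (add_mset B D) \<Longrightarrow> WF X G (add_mset (Imp A B) D)"
| wrefl: "WF X (add_mset B (add_mset (Box B) G)) D \<Longrightarrow> WF X (add_mset (Box B) G) D"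
| wboxr: "WF X (G + image_mset Box P) (add_mset A D) \<Longrightarrow> X (image_mset Box P) {#A#}
     \<Longrightarrow> WF X (G + image_mset Box P) (add_mset (Box A) D)"

lemma WF_mono: "X \<le> Y \<Longrightarrow> WF X \<le> WF Y"
proof (intro le_funI le_boolI)
  fix G D assume "X \<le> Y" "WF X G D"
  then show "WF Y G D"
    by (induction rule: WF.induct[OF \<open>WF X G D\<close>]) (auto intro: WF.intros)
qed

lemma WF_mono': "WF X G D \<Longrightarrow> (\<And>G D. X G D \<Longrightarrow> Y G D) \<Longrightarrow> WF Y G D"
  using WF_mono[of X Y] by (auto simp: le_fun_def)

coinductive Prov :: "fm multiset \<Rightarrow> fm multiset \<Rightarrow> bool" where
  "WF Prov G D \<Longrightarrow> Prov G D"
monos WF_mono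

lemma Prov_iff: "Prov G D \<longleftrightarrow> WF Prov G D"
  by (auto elim: Prov.cases intro: Prov.intros)

lemma ax1': "At p \<in># G \<Longrightarrow> At p \<in># D \<Longrightarrow> WF X G D"
  by (metis insert_DiffM wax1)
lemma ax2': "Bot \<in># G \<Longrightarrow> WF X G D"
  by (metis insert_DiffM wax2)
lemma impl': "Imp A B \<in># G \<Longrightarrow> WF X (add_mset B (G - {#Imp A B#})) D \<Longrightarrow> WF X (G - {#Imp A B#}) (add_mset A D) \<Longrightarrow> WF X G D"
  by (metis insert_DiffM wimpl)
lemma impr': "Imp A B \<in># D \<Longrightarrow> WF X (add_mset A G) (add_mset B (D - {#Imp A B#})) \<Longrightarrow> WF X G D"
  by (metis insert_DiffM wimpr)
lemma refl': "Box B \<in># G \<Longrightarrow> WF X (add_mset B G) D \<Longrightarrow> WF X G D"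
  by (metis insert_DiffM wrefl)
lemma boxr': "Box A \<in># D \<Longrightarrow> image_mset Box P \<subseteq># G \<Longrightarrow> WF X G (add_mset A (D - {#Box A#}))
   \<Longrightarrow> X (image_mset Box P) {#A#} \<Longrightarrow> WF X G D"
  by (metis insert_DiffM subset_mset.diff_add wboxr)

lemma mdel1[simp]: "add_mset c (add_mset x M) - {#x#} = add_mset c M"
  by (metis add_mset_commute add_mset_remove_trivial)

lemma invL1: "WF Prov G D \<Longrightarrow> Imp b c \<in># G \<Longrightarrow> WF Prov (add_mset c (G - {#Imp b c#})) D"
proof (induction rule: WF.induct)
  case (wax1 p G D) then show ?case by (intro ax1'[of p]) auto
next
  case (wax2 G D) then show ?case by (intro ax2') auto
next
  case (wimpl B G D A)
  show ?case
  proof (cases "Imp A B = Imp b c")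
    case True then show ?thesis using wimpl by auto
  next
    case False
    then have m: "Imp b c \<in># G" using wimpl by auto
    show ?thesis
      apply (rule impl'[of A B])
    proof -
      let ?G' = "G - {#Imp b c#}"
      have e1: "add_mset (Imp A B) G - {#Imp b c#} = add_mset (Imp A B) ?G'" using m by simp
      show "Imp A B \<in># add_mset c (add_mset (Imp A B) G - {#Imp b c#})" unfolding e1 by simp
      have i1: "WF Prov (add_mset c (add_mset B ?G')) D" using wimpl.IH(1) m by simp
      show "WF Prov (add_mset B (add_mset c (add_mset (Imp A B) G - {#Imp b c#}) - {#Imp A B#})) D"
        unfolding e1 mdel1 using i1 by (metis add_mset_commute)
      have i2: "WF Prov (add_mset c ?G') (add_mset A D)" using wimpl.IH(2) m by simp
      show "WF Prov (add_mset c (add_mset (Imp A B) G - {#Imp b c#}) - {#Imp A B#}) (add_mset A D)"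
        unfolding e1 mdel1 using i2 .
    qed
  qed
next
  case (wimpr A G B D)
  then have m: "Imp b c \<in># G" by simp
  have i: "WF Prov (add_mset c (add_mset A (G - {#Imp b c#}))) (add_mset B D)"
    using wimpr.IH m by simp
  show ?case
    apply (rule impr'[of A B])
    using i by (simp_all, metis add_mset_commute)
next
  case (wrefl B G D)
  then have m: "Imp b c \<in># G" by simp
  have i: "WF Prov (add_mset c (add_mset B (add_mset (Box B) (G - {#Imp b c#})))) D"
    using wrefl.IH m by simp
  show ?case
    apply (rule refl'[of B])
    using i m by (simp_all, metis add_mset_commute)
next
  case (wboxr G P A D)
  then have m: "Imp b c \<in># G" by auto
  have e: "G + image_mset Box P - {#Imp b c#} = (G - {#Imp b c#}) + image_mset Box P"
    using m by (simp add: multiset_diff_union_assoc)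
  show ?case
    apply (rule boxr'[of A _ P])
    using wboxr m unfolding e by (simp_all add: subset_mset.le_iff_add)
qed

lemma invL2: "WF Prov G D \<Longrightarrow> Imp b c \<in># G \<Longrightarrow> WF Prov (G - {#Imp b c#}) (add_mset b D)"
proof (induction rule: WF.induct)
  case (wax1 p G D) then show ?case by (intro ax1'[of p]) auto
next
  case (wax2 G D) then show ?case by (intro ax2') auto
next
  case (wimpl B G D A)
  show ?case
  proof (cases "Imp A B = Imp b c")
    case True then show ?thesis using wimpl by auto
  next
    case False
    then have m: "Imp b c \<in># G" using wimpl by auto
    have i1: "WF Prov (add_mset B (G - {#Imp b c#})) (add_mset b D)" using wimpl.IH(1) m by simp
    have i2: "WF Prov (G - {#Imp b c#}) (add_mset b (add_mset A D))" using wimpl.IH(2) m by simp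
    show ?thesis
      apply (rule impl'[of A B])
      using i1 i2 m by (simp_all add: add_mset_commute)
  qed
next
  case (wimpr A G B D)
  then have m: "Imp b c \<in># G" by simp
  have i: "WF Prov (add_mset A (G - {#Imp b c#})) (add_mset b (add_mset B D))"
    using wimpr.IH m by simp
  show ?case
    apply (rule impr'[of A B])
    using i by (simp_all add: add_mset_commute)
next
  case (wrefl B G D)
  then have m: "Imp b c \<in># G" by simp
  have i: "WF Prov (add_mset B (add_mset (Box B) (G - {#Imp b c#}))) (add_mset b D)"
    using wrefl.IH m by simp
  show ?case
    apply (rule refl'[of B])
    using i m by (simp_all add: add_mset_commute)
next
  case (wboxr G P A D)
  then have m: "Imp b c \<in># G" by auto
  have e: "G + image_mset Box P - {#Imp b c#} = (G - {#Imp b c#}) + image_mset Box P"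
    using m by (simp add: multiset_diff_union_assoc)
  have m2: "Imp b c \<in># G + image_mset Box P" using m by simp
  have i: "WF Prov ((G - {#Imp b c#}) + image_mset Box P) (add_mset b (add_mset A D))"
    using wboxr.IH[OF m2] unfolding e .
  show ?case
    apply (rule boxr'[of A _ P])
    using wboxr(2) i unfolding e by (simp_all add: add_mset_commute)
qed

lemma invR: "WF Prov G D \<Longrightarrow> Imp b c \<in># D \<Longrightarrow> WF Prov (add_mset b G) (add_mset c (D - {#Imp b c#}))"
proof (induction rule: WF.induct)
  case (wax1 p G D) then show ?case by (intro ax1'[of p]) auto
next
  case (wax2 G D) then show ?case by (intro ax2') auto
next
  case (wimpl B G D A)
  have i1: "WF Prov (add_mset b (add_mset B G)) (add_mset c (D - {#Imp b c#}))" using wimpl by simp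
  have i2: "WF Prov (add_mset b G) (add_mset c (add_mset A (D - {#Imp b c#})))" using wimpl by simp
  show ?case
    apply (rule impl'[of A B])
    using i1 i2 by (simp_all add: add_mset_commute)
next
  case (wimpr A G B D)
  show ?case
  proof (cases "Imp A B = Imp b c")
    case True then show ?thesis using wimpr by auto
  next
    case False
    then have m: "Imp b c \<in># D" using wimpr by auto
    have i: "WF Prov (add_mset b (add_mset A G)) (add_mset c (add_mset B (D - {#Imp b c#})))"
      using wimpr.IH m by simp
    show ?thesis
      apply (rule impr'[of A B])
      using i m False by (simp_all add: add_mset_commute)
  qed
next
  case (wrefl B G D)
  have i: "WF Prov (add_mset b (add_mset B (add_mset (Box B) G))) (add_mset c (D - {#Imp b c#}))"
    using wrefl by simp
  show ?case
    apply (rule refl'[of B])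
    using i by (simp_all add: add_mset_commute)
next
  case (wboxr G P A D)
  then have m: "Imp b c \<in># D" by auto
  have i: "WF Prov (add_mset b (G + image_mset Box P)) (add_mset c (add_mset A (D - {#Imp b c#})))"
    using wboxr.IH m by simp
  show ?case
    apply (rule boxr'[of A _ P])
    using wboxr(2) i m by (simp_all add: add_mset_commute subset_mset.le_iff_add)
qed

lemma invBox: "WF Prov G D \<Longrightarrow> Box a \<in># D \<Longrightarrow> WF Prov G (add_mset a (D - {#Box a#}))"
proof (induction rule: WF.induct)
  case (wax1 p G D) then show ?case by (intro ax1'[of p]) auto
next
  case (wax2 G D) then show ?case by (intro ax2') auto
next
  case (wimpl B G D A)
  have i1: "WF Prov (add_mset B G) (add_mset a (D - {#Box a#}))" using wimpl by simp
  have i2: "WF Prov G (add_mset a (add_mset A (D - {#Box a#})))" using wimpl by simp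
  show ?case
    apply (rule impl'[of A B])
    using i1 i2 by (simp_all add: add_mset_commute)
next
  case (wimpr A G B D)
  then have m: "Box a \<in># D" by auto
  have i: "WF Prov (add_mset A G) (add_mset a (add_mset B (D - {#Box a#})))"
    using wimpr.IH m by simp
  show ?case
    apply (rule impr'[of A B])
    using i m by (simp_all add: add_mset_commute)
next
  case (wrefl B G D)
  then show ?case by (intro WF.wrefl) simp
next
  case (wboxr G P A D)
  show ?case
  proof (cases "A = a")
    case True then show ?thesis using wboxr by auto
  next
    case False
    then have m: "Box a \<in># D" using wboxr by auto
    have i: "WF Prov (G + image_mset Box P) (add_mset a (add_mset A (D - {#Box a#})))"
      using wboxr.IH m by simp
    show ?thesis
      apply (rule boxr'[of A _ P])
      using wboxr(2) i m False by (simp_all add: add_mset_commute)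
  qed
qed

definition CLp :: "fm \<Rightarrow> bool" where
  "CLp x \<longleftrightarrow> (\<forall>G D. Prov (add_mset x (add_mset x G)) D \<longrightarrow> Prov (add_mset x G) D)"
definition CRp :: "fm \<Rightarrow> bool" where
  "CRp x \<longleftrightarrow> (\<forall>G D. Prov G (add_mset x (add_mset x D)) \<longrightarrow> Prov G (add_mset x D))"

lemma cnt_mem: "2 \<le> count M x \<Longrightarrow> x \<in># M"
  using count_greater_zero_iff[of M x] by linarith

lemma cnt_add: "2 \<le> count D F \<Longrightarrow> 2 \<le> count (add_mset A D) F"
proof -
  have "count D F \<le> count (add_mset A D) F" by simp
  then show "2 \<le> count D F \<Longrightarrow> 2 \<le> count (add_mset A D) F" by linarith
qed

lemma cnt_memS: "2 \<le> count (add_mset x M) x \<Longrightarrow> x \<in># M"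
  using count_greater_zero_iff[of M x] by (simp del: count_greater_zero_iff)

lemma CR_step:
  assumes hI: "\<And>B C. F = Imp B C \<Longrightarrow> CLp B \<and> CRp C"
    and hB: "\<And>C. F = Box C \<Longrightarrow> CRp C"
  shows "WF Prov G D \<Longrightarrow> 2 \<le> count D F \<Longrightarrow> WF Prov G (D - {#F#})"
proof (induction rule: WF.induct)
  case (wax1 p G D) then show ?case by (intro ax1'[of p]) (auto simp: in_diff_count)
next
  case (wax2 G D) then show ?case by (intro ax2') auto
next
  case (wimpl B G D A)
  then have m: "F \<in># D" by (intro cnt_mem) simp
  have c2: "2 \<le> count (add_mset A D) F" using wimpl.prems by (rule cnt_add)
  have i2: "WF Prov G (add_mset A (D - {#F#}))" using wimpl.IH(2)[OF c2] diff_union_swap2[OF m] by simp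
  have i1: "WF Prov (add_mset B G) (D - {#F#})" using wimpl.IH(1) wimpl.prems by simp
  show ?case using i1 i2 by (rule WF.wimpl)
next
  case (wimpr A G B D)
  show ?case
  proof (cases "F = Imp A B")
    case True
    then have "2 \<le> count (add_mset (Imp A B) D) (Imp A B)" using wimpr.prems by simp
    then have m: "Imp A B \<in># D" by (rule cnt_memS)
    then obtain D' where D': "D = add_mset (Imp A B) D'" by (metis insert_DiffM)
    have "WF Prov (add_mset A (add_mset A G)) (add_mset B (add_mset B D'))"
      using invR[OF wimpr.hyps, of A B] D' by (simp add: add_mset_commute)
    then have "Prov (add_mset A (add_mset A G)) (add_mset B (add_mset B D'))" using Prov_iff by blast
    then have "Prov (add_mset A G) (add_mset B (add_mset B D'))" using hI[OF True] unfolding CLp_def by blast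
    then have "Prov (add_mset A G) (add_mset B D')" using hI[OF True] unfolding CRp_def by blast
    then have "WF Prov G (add_mset (Imp A B) D')" using Prov_iff WF.wimpr by blast
    then show ?thesis using True D' by simp
  next
    case False
    then have m: "F \<in># D" using wimpr.prems by (intro cnt_mem) simp
    have c2: "2 \<le> count (add_mset B D) F" using wimpr.prems False by (intro cnt_add) simp
    have "WF Prov (add_mset A G) (add_mset B (D - {#F#}))" using wimpr.IH[OF c2] diff_union_swap2[OF m] by simp
    then have "WF Prov G (add_mset (Imp A B) (D - {#F#}))" by (rule WF.wimpr)
    then show ?thesis using False m by simp
  qed
next
  case (wrefl B G D)
  have "WF Prov (add_mset B (add_mset (Box B) G)) (D - {#F#})" using wrefl.IH wrefl.prems by simp
  then show ?case by (rule WF.wrefl)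
next
  case (wboxr G P A D)
  show ?case
  proof (cases "F = Box A")
    case True
    then have "2 \<le> count (add_mset (Box A) D) (Box A)" using wboxr.prems by simp
    then have m: "Box A \<in># D" by (rule cnt_memS)
    then obtain D' where D': "D = add_mset (Box A) D'" by (metis insert_DiffM)
    have "WF Prov (G + image_mset Box P) (add_mset A (add_mset A D'))"
      using invBox[OF wboxr.hyps(1), of A] D' by (simp add: add_mset_commute)
    then have "Prov (G + image_mset Box P) (add_mset A (add_mset A D'))" using Prov_iff by blast
    then have "Prov (G + image_mset Box P) (add_mset A D')" using hB[OF True] unfolding CRp_def by blast
    then have "WF Prov (G + image_mset Box P) (add_mset (Box A) D')"
      using Prov_iff WF.wboxr wboxr.hyps(2) by blast
    then show ?thesis using True D' by simp
  next
    case False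
    then have m: "F \<in># D" using wboxr.prems by (intro cnt_mem) simp
    have c2: "2 \<le> count (add_mset A D) F" using wboxr.prems False by (intro cnt_add) simp
    have "WF Prov (G + image_mset Box P) (add_mset A (D - {#F#}))" using wboxr.IH[OF c2] diff_union_swap2[OF m] by simp
    then have "WF Prov (G + image_mset Box P) (add_mset (Box A) (D - {#F#}))"
      using wboxr.hyps(2) by (rule WF.wboxr)
    then show ?thesis using False m by simp
  qed
qed

lemma CL_step:
  assumes hI: "\<And>B C. F = Imp B C \<Longrightarrow> CLp C \<and> CRp B"
  shows "WF Prov G D \<Longrightarrow> 2 \<le> count G F \<Longrightarrow>
    WF (\<lambda>G D. (\<exists>G1. Prov G1 D \<and> 2 \<le> count G1 F \<and> G = G1 - {#F#}) \<or> Prov G D) (G - {#F#}) D"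
    (is "_ \<Longrightarrow> _ \<Longrightarrow> WF ?Y _ _")
proof (induction rule: WF.induct)
  case (wax1 p G D) then show ?case by (intro ax1'[of p]) (auto simp: in_diff_count)
next
  case (wax2 G D) then show ?case by (intro ax2') (auto simp: in_diff_count)
next
  case (wimpl B G D A)
  show ?case
  proof (cases "F = Imp A B")
    case True
    then have "2 \<le> count (add_mset (Imp A B) G) (Imp A B)" using wimpl.prems by simp
    then have m: "Imp A B \<in># G" by (rule cnt_memS)
    then obtain G' where G': "G = add_mset (Imp A B) G'" by (metis insert_DiffM)
    have "WF Prov (add_mset B (add_mset B G')) D"
      using invL1[OF wimpl.hyps(1), of A B] G' by simp
    then have "Prov (add_mset B (add_mset B G')) D" using Prov_iff by blast
    then have p1: "Prov (add_mset B G') D" using hI[OF True] unfolding CLp_def by blast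
    have "WF Prov G' (add_mset A (add_mset A D))"
      using invL2[OF wimpl.hyps(2), of A B] G' by simp
    then have "Prov G' (add_mset A (add_mset A D))" using Prov_iff by blast
    then have p2: "Prov G' (add_mset A D)" using hI[OF True] unfolding CRp_def by blast
    have "WF Prov (add_mset (Imp A B) G') D" using p1 p2 Prov_iff WF.wimpl by blast
    then have "WF ?Y (add_mset (Imp A B) G') D" by (rule WF_mono') (rule disjI2)
    moreover have "add_mset (Imp A B) G - {#F#} = add_mset (Imp A B) G'" using True G' by simp
    ultimately show ?thesis by simp
  next
    case False
    then have m: "F \<in># G" using wimpl.prems by (intro cnt_mem) simp
    have c2: "2 \<le> count G F" using wimpl.prems False by simp
    have i1: "WF ?Y (add_mset B (G - {#F#})) D"
      using wimpl.IH(1)[OF cnt_add[OF c2]] unfolding diff_union_swap2[OF m] .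
    have i2: "WF ?Y (G - {#F#}) (add_mset A D)" using wimpl.IH(2)[OF c2] .
    have "WF ?Y (add_mset (Imp A B) (G - {#F#})) D" using i1 i2 by (rule WF.wimpl)
    then show ?thesis unfolding diff_union_swap2[OF m] .
  qed
next
  case (wimpr A G B D)
  have m: "F \<in># G" using wimpr.prems by (rule cnt_mem)
  have "WF ?Y (add_mset A (G - {#F#})) (add_mset B D)"
    using wimpr.IH[OF cnt_add[OF wimpr.prems]] unfolding diff_union_swap2[OF m] .
  then show ?case by (rule WF.wimpr)
next
  case (wrefl B G D)
  have c: "2 \<le> count (add_mset B (add_mset (Box B) G)) F" using wrefl.prems by (rule cnt_add)
  note ih = wrefl.IH[OF c]
  show ?case
  proof (cases "F = Box B")
    case True
    then have "2 \<le> count (add_mset (Box B) G) (Box B)" using wrefl.prems by simp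
    then have m: "Box B \<in># G" by (rule cnt_memS)
    have e1: "add_mset B (add_mset (Box B) G) - {#F#} = add_mset B G" using True by simp
    have e2: "add_mset (Box B) G - {#F#} = G" using True by simp
    have "WF ?Y (add_mset B G) D" using ih unfolding e1 .
    then have "WF ?Y G D" by (rule refl'[of B, OF m])
    then show ?thesis unfolding e2 .
  next
    case False
    then have m: "F \<in># G" using wrefl.prems by (intro cnt_mem) simp
    have e: "add_mset B (add_mset (Box B) G) - {#F#} = add_mset B (add_mset (Box B) (G - {#F#}))"
      using m by simp
    have "WF ?Y (add_mset (Box B) (G - {#F#})) D" using ih unfolding e by (rule WF.wrefl)
    then show ?thesis unfolding diff_union_swap2[OF m] .
  qed
next
  case (wboxr G P A D)
  note ih = wboxr.IH[OF wboxr.prems]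
  show ?case
  proof (cases "F \<in># G")
    case True
    have e: "G + image_mset Box P - {#F#} = (G - {#F#}) + image_mset Box P"
      using True by (simp add: multiset_diff_union_assoc)
    have r: "?Y (image_mset Box P) {#A#}" using wboxr.hyps(2) by (rule disjI2)
    show ?thesis using WF.wboxr[OF ih[unfolded e] r] unfolding e .
  next
    case False
    then have cP: "2 \<le> count (image_mset Box P) F" using wboxr.prems by (simp add: not_in_iff)
    then have "F \<in># image_mset Box P" by (rule cnt_mem)
    then obtain c where c: "c \<in># P" "F = Box c" by (metis imageE set_image_mset)
    define P' where "P' = P - {#c#}"
    have eP: "image_mset Box P' = image_mset Box P - {#F#}"
      unfolding P'_def using c by (simp add: image_mset_Diff)
    have e: "G + image_mset Box P - {#F#} = G + image_mset Box P'"
      unfolding eP using \<open>F \<in># image_mset Box P\<close>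
      by (intro multiset_diff_union_assoc) (simp only: single_subset_iff)
    have r0: "Prov (image_mset Box P) {#A#} \<and> 2 \<le> count (image_mset Box P) F \<and> image_mset Box P' = image_mset Box P - {#F#}"
      using wboxr.hyps(2) cP eP by (intro conjI)
    have r: "?Y (image_mset Box P') {#A#}"
      using r0 by (intro disjI1 exI)
    show ?thesis using WF.wboxr[OF ih[unfolded e] r] unfolding e .
  qed
qed

lemma CL_main:
  assumes hI: "\<And>B C. F = Imp B C \<Longrightarrow> CLp C \<and> CRp B"
    and p: "Prov G D" and c: "2 \<le> count G F"
  shows "Prov (G - {#F#}) D"
proof -
  define Q where "Q = (\<lambda>G' D. \<exists>G1. Prov G1 D \<and> 2 \<le> count G1 F \<and> G' = G1 - {#F#})"
  have "Q (G - {#F#}) D" using p c unfolding Q_def by blast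
  then show ?thesis
  proof (rule Prov.coinduct[of Q])
    fix G' D' assume "Q G' D'"
    then obtain G1 where g: "Prov G1 D'" "2 \<le> count G1 F" "G' = G1 - {#F#}" unfolding Q_def by blast
    have "WF Prov G1 D'" using g(1) Prov_iff by blast
    from CL_step[OF hI this g(2)]
    have "WF (\<lambda>G D. Q G D \<or> Prov G D) G' D'" unfolding g(3) Q_def .
    then show "\<exists>G D. G' = G \<and> D' = D \<and> WF (\<lambda>G D. Q G D \<or> Prov G D) G D" by blast
  qed
qed


lemma CLCR:
  assumes h1: "\<And>B C. F = Imp B C \<Longrightarrow> CLp B \<and> CRp B \<and> CLp C \<and> CRp C"
    and h2: "\<And>C. F = Box C \<Longrightarrow> CRp C"
  shows "CLp F \<and> CRp F"
proof
  show "CLp F" unfolding CLp_def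
  proof (intro allI impI)
    fix G D assume p: "Prov (add_mset F (add_mset F G)) D"
    have c: "2 \<le> count (add_mset F (add_mset F G)) F" by simp
    have hI: "\<And>B C. F = Imp B C \<Longrightarrow> CLp C \<and> CRp B" using h1 by blast
    have "Prov (add_mset F (add_mset F G) - {#F#}) D"
      using CL_main[OF hI p c] .
    then show "Prov (add_mset F G) D" by simp
  qed
  show "CRp F" unfolding CRp_def
  proof (intro allI impI)
    fix G D assume p: "Prov G (add_mset F (add_mset F D))"
    have c: "2 \<le> count (add_mset F (add_mset F D)) F" by simp
    have w: "WF Prov G (add_mset F (add_mset F D))" using p Prov_iff by blast
    have hI: "\<And>B C. F = Imp B C \<Longrightarrow> CLp B \<and> CRp C" using h1 by blast
    have "WF Prov G (add_mset F (add_mset F D) - {#F#})"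
      using CR_step[OF hI h2 w c] .
    then show "Prov G (add_mset F D)" using Prov_iff by simp
  qed
qed

lemma CLCR_all: "CLp F \<and> CRp F"
proof (induction F)
  case Bot show ?case by (rule CLCR) simp_all
next
  case (At x) show ?case by (rule CLCR) simp_all
next
  case (Imp F1 F2) show ?case by (rule CLCR) (use Imp.IH in auto)
next
  case (Box F) show ?case by (rule CLCR) (use Box.IH in auto)
qed

inductive WFn :: "(fm multiset \<Rightarrow> fm multiset \<Rightarrow> bool) \<Rightarrow> nat \<Rightarrow> fm multiset \<Rightarrow> fm multiset \<Rightarrow> bool"
  for X where
  n1: "WFn X n (add_mset (At p) G) (add_mset (At p) D)"
| n2: "WFn X n (add_mset Bot G) D"
| n3: "WFn X m1 (add_mset B G) D \<Longrightarrow> m1 < n \<Longrightarrow> WFn X m2 G (add_mset A D) \<Longrightarrow> m2 < n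
     \<Longrightarrow> WFn X n (add_mset (Imp A B) G) D"
| n4: "WFn X m (add_mset A G) (add_mset B D) \<Longrightarrow> m < n \<Longrightarrow> WFn X n G (add_mset (Imp A B) D)"
| n5: "WFn X m (add_mset B (add_mset (Box B) G)) D \<Longrightarrow> m < n \<Longrightarrow> WFn X n (add_mset (Box B) G) D"
| n6: "WFn X m (G + image_mset Box P) (add_mset A D) \<Longrightarrow> m < n \<Longrightarrow> X (image_mset Box P) {#A#}
     \<Longrightarrow> WFn X n (G + image_mset Box P) (add_mset (Box A) D)"

lemma WF_WFn: "WF X G D \<Longrightarrow> \<exists>n. WFn X n G D"
proof (induction rule: WF.induct)
  case (wax1 p G D) then show ?case using n1 by blast
next
  case (wax2 G D) then show ?case using n2 by blast
next
  case (wimpl B G D A)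
  then obtain m1 m2 where f1: "WFn X m1 (add_mset B G) D" and f2: "WFn X m2 G (add_mset A D)" by blast
  have "WFn X (Suc (max m1 m2)) (add_mset (Imp A B) G) D" by (rule n3[OF f1 _ f2]) auto
  then show ?case by blast
next
  case (wimpr A G B D)
  then obtain m where "WFn X m (add_mset A G) (add_mset B D)" by blast
  then have "WFn X (Suc m) G (add_mset (Imp A B) D)" by (rule n4) auto
  then show ?case by blast
next
  case (wrefl B G D)
  then obtain m where "WFn X m (add_mset B (add_mset (Box B) G)) D" by blast
  then have "WFn X (Suc m) (add_mset (Box B) G) D" by (rule n5) auto
  then show ?case by blast
next
  case (wboxr G P A D)
  then obtain m where f: "WFn X m (G + image_mset Box P) (add_mset A D)" by blast
  have "WFn X (Suc m) (G + image_mset Box P) (add_mset (Box A) D)" by (rule n6[OF f _ wboxr(2)]) auto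
  then show ?case by blast
qed

definition good :: "sequent \<times> nat \<Rightarrow> bool" where
  "good x \<longleftrightarrow> WFn Prov (snd x) (fst (fst x)) (snd (fst x))"

definition okstep :: "sequent \<times> nat \<Rightarrow> rl \<Rightarrow> (sequent \<times> nat) list \<Rightarrow> bool" where
  "okstep x r ps \<longleftrightarrow> step_ok (fst x) r (map fst ps) \<and>
     (\<forall>i<length ps. good (ps!i) \<and> (\<not>(r = BoxR \<and> i = 1) \<longrightarrow> snd (ps!i) < snd x))"

lemma less2: "(\<forall>i<Suc (Suc 0). P i) \<longleftrightarrow> P 0 \<and> P 1"
  by (auto simp: less_Suc_eq)

lemma ex_okstep: "good x \<Longrightarrow> \<exists>r ps. okstep x r ps"
proof -
  obtain G D n where x: "x = ((G, D), n)" by (metis prod.collapse)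
  assume "good x"
  then have "WFn Prov n G D" unfolding good_def x by simp
  then show ?thesis
  proof cases
    case (n1 p G' D')
    have s: "step_ok (G, D) Ax (map fst [])" unfolding n1
      by (simp only: step_ok.simps list.map) (intro conjI refl disjI1, blast)
    have "okstep x Ax []" unfolding okstep_def x fst_conv snd_conv using s by simp
    then show ?thesis by blast
  next
    case (n2 G')
    have s: "step_ok (G, D) Ax (map fst [])" unfolding n2
      by (simp only: step_ok.simps list.map) (intro conjI refl disjI2, blast)
    have "okstep x Ax []" unfolding okstep_def x fst_conv snd_conv using s by simp
    then show ?thesis by blast
  next
    case (n3 m1 B G' m2 A)
    let ?ps = "[((add_mset B G', D), m1), ((G', add_mset A D), m2)]"
    have s: "step_ok (G, D) ImpL (map fst ?ps)" unfolding n3(1)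
      by (simp only: step_ok.simps list.map fst_conv) (intro exI conjI, (rule refl)+)
    have g: "\<forall>i<length ?ps. good (?ps!i) \<and> (\<not>(ImpL = BoxR \<and> i = 1) \<longrightarrow> snd (?ps!i) < n)"
      using n3 by (simp add: less2 good_def)
    have "okstep x ImpL ?ps" unfolding okstep_def x fst_conv snd_conv using s g by (rule conjI)
    then show ?thesis by blast
  next
    case (n4 m A B D')
    let ?ps = "[((add_mset A G, add_mset B D'), m)]"
    have s: "step_ok (G, D) ImpR (map fst ?ps)" unfolding n4(1)
      by (simp only: step_ok.simps list.map fst_conv) (intro exI conjI, (rule refl)+)
    have g: "\<forall>i<length ?ps. good (?ps!i) \<and> (\<not>(ImpR = BoxR \<and> i = 1) \<longrightarrow> snd (?ps!i) < n)"
      using n4 by (simp add: good_def)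
    have "okstep x ImpR ?ps" unfolding okstep_def x fst_conv snd_conv using s g by (rule conjI)
    then show ?thesis by blast
  next
    case (n5 m B G')
    let ?ps = "[((add_mset B (add_mset (Box B) G'), D), m)]"
    have s: "step_ok (G, D) Refl (map fst ?ps)" unfolding n5(1)
      by (simp only: step_ok.simps list.map fst_conv) (intro exI conjI, (rule refl)+)
    have g: "\<forall>i<length ?ps. good (?ps!i) \<and> (\<not>(Refl = BoxR \<and> i = 1) \<longrightarrow> snd (?ps!i) < n)"
      using n5 by (simp add: good_def)
    have "okstep x Refl ?ps" unfolding okstep_def x fst_conv snd_conv using s g by (rule conjI)
    then show ?thesis by blast
  next
    case (n6 m G' P A D')
    have "WF Prov (image_mset Box P) {#A#}" using n6(5) Prov_iff by blast
    then obtain k where k: "WFn Prov k (image_mset Box P) {#A#}" using WF_WFn by blast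
    let ?ps = "[((G' + image_mset Box P, add_mset A D'), m), ((image_mset Box P, {#A#}), k)]"
    have s: "step_ok (G, D) BoxR (map fst ?ps)" unfolding n6(1,2)
      by (simp only: step_ok.simps list.map fst_conv) (intro exI conjI, (rule refl)+)
    have g: "\<forall>i<length ?ps. good (?ps!i) \<and> (\<not>(BoxR = BoxR \<and> i = 1) \<longrightarrow> snd (?ps!i) < n)"
      using n6 k by (simp add: less2 good_def)
    have "okstep x BoxR ?ps" unfolding okstep_def x fst_conv snd_conv using s g by (rule conjI)
    then show ?thesis by blast
  qed
qed

definition ch :: "sequent \<times> nat \<Rightarrow> rl \<times> (sequent \<times> nat) list" where
  "ch x = (SOME p. okstep x (fst p) (snd p))"

lemma ch_ok: "good x \<Longrightarrow> okstep x (fst (ch x)) (snd (ch x))"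
proof -
  assume "good x"
  then obtain r ps where "okstep x r ps" using ex_okstep by blast
  then have "\<exists>p. okstep x (fst p) (snd p)" by (intro exI[of _ "(r, ps)"]) simp
  then show ?thesis unfolding ch_def by (rule someI_ex)
qed

primcorec mk :: "sequent \<times> nat \<Rightarrow> ptree" where
  "mk x = PNode (fst x) (fst (ch x)) (map mk (snd (ch x)))"


lemma mk_lc: "good x \<Longrightarrow> locally_correct (mk x)"
proof -
  assume "good x"
  then have "\<exists>x. mk x = mk x \<and> good x" by blast
  show "locally_correct (mk x)"
    using \<open>good x\<close>
  proof (coinduction arbitrary: x rule: locally_correct.coinduct)
    case (locally_correct x)
    have ok: "okstep x (fst (ch x)) (snd (ch x))" using ch_ok[OF locally_correct] .
    have r: "root \<circ> mk = fst" by (rule ext) simp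
    have "step_ok (fst x) (fst (ch x)) (map fst (snd (ch x)))" using ok unfolding okstep_def by blast
    moreover have "\<forall>s\<in>set (subs (mk x)). (\<exists>y. s = mk y \<and> good y) \<or> locally_correct s"
    proof
      fix s assume "s \<in> set (subs (mk x))"
      then obtain i where i: "i < length (snd (ch x))" "s = mk (snd (ch x) ! i)"
        by (auto simp: in_set_conv_nth)
      then have "good (snd (ch x) ! i)" using ok unfolding okstep_def by blast
      then show "(\<exists>y. s = mk y \<and> good y) \<or> locally_correct s" using i by blast
    qed
    ultimately show ?case using r by simp
  qed
qed

lemma mk_branch:
  assumes gx: "good x" and b: "is_branch (mk x) f d"
  shows "\<exists>i\<ge>n. rule (f i) = BoxR \<and> d i = 1"
proof (rule ccontr)
  assume na: "\<not> (\<exists>i\<ge>n. rule (f i) = BoxR \<and> d i = 1)"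
  define g where "g = rec_nat x (\<lambda>i y. snd (ch y) ! d i)"
  have g0: "g 0 = x" unfolding g_def by simp
  have gS: "\<And>i. g (Suc i) = snd (ch (g i)) ! d i" unfolding g_def by simp
  have fg: "f i = mk (g i) \<and> good (g i)" for i
  proof (induction i)
    case 0 then show ?case using b gx g0 unfolding is_branch_def by simp
  next
    case (Suc i)
    then have fi: "f i = mk (g i)" and gi: "good (g i)" by auto
    have ok: "okstep (g i) (fst (ch (g i))) (snd (ch (g i)))" using ch_ok[OF gi] .
    have dl: "d i < length (subs (f i))" and fs: "f (Suc i) = subs (f i) ! d i"
      using b unfolding is_branch_def by auto
    then have dl': "d i < length (snd (ch (g i)))" using fi by simp
    have "f (Suc i) = mk (g (Suc i))" using fs fi dl' gS by simp
    moreover have "good (g (Suc i))" using ok dl' gS unfolding okstep_def by simp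
    ultimately show ?case by blast
  qed
  have dec: "snd (g (Suc i)) < snd (g i)" if "i \<ge> n" for i
  proof -
    have fi: "f i = mk (g i)" and gi: "good (g i)" using fg by auto
    have ok: "okstep (g i) (fst (ch (g i))) (snd (ch (g i)))" using ch_ok[OF gi] .
    have dl: "d i < length (subs (f i))" using b unfolding is_branch_def by auto
    then have dl': "d i < length (snd (ch (g i)))" using fi by simp
    have "\<not> (fst (ch (g i)) = BoxR \<and> d i = 1)" using na that fi by auto
    then show ?thesis using ok dl' gS unfolding okstep_def by simp
  qed
  have "snd (g (n + k)) + k \<le> snd (g n)" for k
  proof (induction k)
    case 0 then show ?case by simp
  next
    case (Suc k)
    have "snd (g (Suc (n + k))) < snd (g (n + k))" by (rule dec) simp
    then show ?case using Suc by simp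
  qed
  from this[of "Suc (snd (g n))"] show False by simp
qed

lemma Prov_provable: "Prov G D \<Longrightarrow> provable (G, D)"
proof -
  assume "Prov G D"
  then have "WF Prov G D" using Prov_iff by blast
  then obtain n where "WFn Prov n G D" using WF_WFn by blast
  then have gx: "good ((G, D), n)" unfolding good_def by simp
  have "inf_proof (mk ((G, D), n))"
    unfolding inf_proof_def using mk_lc[OF gx] mk_branch[OF gx] by blast
  moreover have "root (mk ((G, D), n)) = (G, D)" by simp
  ultimately show ?thesis unfolding provable_def by blast
qed

lemma step_WF:
  assumes h1: "step_ok S r ps"
    and h2: "\<forall>i<length ps. (r = BoxR \<and> i = 1 \<longrightarrow> X (fst (ps!i)) (snd (ps!i))) \<and>
       (\<not>(r = BoxR \<and> i = 1) \<longrightarrow> WF X (fst (ps!i)) (snd (ps!i)))"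
  shows "WF X (fst S) (snd S)"
proof (cases r)
  case Ax
  then have "(\<exists>\<Gamma> \<Delta> p. S = (add_mset (At p) \<Gamma>, add_mset (At p) \<Delta>)) \<or> (\<exists>\<Gamma> \<Delta>. S = (add_mset Bot \<Gamma>, \<Delta>))"
    using h1 by simp
  then show ?thesis by (auto intro: wax1 wax2)
next
  case ImpL
  then obtain \<Gamma> \<Delta> A B where S: "S = (add_mset (Imp A B) \<Gamma>, \<Delta>)"
    and ps: "ps = [(add_mset B \<Gamma>, \<Delta>), (\<Gamma>, add_mset A \<Delta>)]" using h1 by auto
  have a: "WF X (add_mset B \<Gamma>) \<Delta>" using h2[rule_format, of 0] ps ImpL by simp
  have b: "WF X \<Gamma> (add_mset A \<Delta>)" using h2[rule_format, of 1] ps ImpL by simp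
  show ?thesis using wimpl[OF a b] S by simp
next
  case ImpR
  then obtain \<Gamma> \<Delta> A B where S: "S = (\<Gamma>, add_mset (Imp A B) \<Delta>)"
    and ps: "ps = [(add_mset A \<Gamma>, add_mset B \<Delta>)]" using h1 by auto
  have a: "WF X (add_mset A \<Gamma>) (add_mset B \<Delta>)" using h2[rule_format, of 0] ps ImpR by simp
  show ?thesis using wimpr[OF a] S by simp
next
  case Refl
  then obtain \<Gamma> \<Delta> B where S: "S = (add_mset (Box B) \<Gamma>, \<Delta>)"
    and ps: "ps = [(add_mset B (add_mset (Box B) \<Gamma>), \<Delta>)]" using h1 by auto
  have a: "WF X (add_mset B (add_mset (Box B) \<Gamma>)) \<Delta>" using h2[rule_format, of 0] ps Refl by simp
  show ?thesis using wrefl[OF a] S by simp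
next
  case BoxR
  then obtain \<Gamma> \<Pi> \<Delta> A where S: "S = (\<Gamma> + image_mset Box \<Pi>, add_mset (Box A) \<Delta>)"
    and ps: "ps = [(\<Gamma> + image_mset Box \<Pi>, add_mset A \<Delta>), (image_mset Box \<Pi>, {#A#})]" using h1 by auto
  have a: "WF X (\<Gamma> + image_mset Box \<Pi>) (add_mset A \<Delta>)" using h2[rule_format, of 0] ps BoxR by simp
  have b: "X (image_mset Box \<Pi>) {#A#}" using h2[rule_format, of 1] ps BoxR by simp
  show ?thesis using wboxr[OF a b] S by simp
qed

lemma child_inf:
  assumes t: "inf_proof t" and i: "i < length (subs t)"
  shows "inf_proof (subs t ! i)"
proof -
  have lc: "locally_correct t" using t unfolding inf_proof_def by blast
  then have "locally_correct (subs t ! i)" using i by (cases rule: locally_correct.cases) auto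
  moreover have "\<forall>n. \<exists>j\<ge>n. rule (f j) = BoxR \<and> d j = 1" if b: "is_branch (subs t ! i) f d" for f d
  proof
    fix n
    define f' where "f' = (\<lambda>k. case k of 0 \<Rightarrow> t | Suc k \<Rightarrow> f k)"
    define d' where "d' = (\<lambda>k. case k of 0 \<Rightarrow> i | Suc k \<Rightarrow> d k)"
    have f0: "f' 0 = t" unfolding f'_def by simp
    have fk: "\<forall>k. d' k < length (subs (f' k)) \<and> f' (Suc k) = subs (f' k) ! d' k"
    proof
      fix k
      show "d' k < length (subs (f' k)) \<and> f' (Suc k) = subs (f' k) ! d' k"
        using b i unfolding is_branch_def f'_def d'_def by (cases k) auto
    qed
    have "is_branch t f' d'" unfolding is_branch_def using f0 fk by blast
    then obtain j where j: "j \<ge> Suc n" "rule (f' j) = BoxR" "d' j = 1"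
      using t unfolding inf_proof_def by blast
    then obtain k where k: "j = Suc k" by (cases j) auto
    show "\<exists>j\<ge>n. rule (f j) = BoxR \<and> d j = 1"
      using j k unfolding f'_def d'_def by auto
  qed
  ultimately show ?thesis unfolding inf_proof_def by blast
qed

lemma inf_WF:
  assumes t: "inf_proof t"
  shows "WF (\<lambda>G D. provable (G, D) \<or> Prov G D) (fst (root t)) (snd (root t))"
proof (rule ccontr)
  define Y where "Y = (\<lambda>G D. provable (G, D) \<or> Prov G D)"
  define bad where "bad = (\<lambda>s. inf_proof s \<and> \<not> WF Y (fst (root s)) (snd (root s)))"
  have nxt: "\<exists>i<length (subs s). \<not>(rule s = BoxR \<and> i = 1) \<and> bad (subs s ! i)" if bs: "bad s" for s
  proof (rule ccontr)
    assume nn: "\<not> ?thesis"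
    have isp: "inf_proof s" using bs unfolding bad_def by blast
    then have lc: "locally_correct s" unfolding inf_proof_def by blast
    then have st: "step_ok (root s) (rule s) (map root (subs s))"
      by (cases rule: locally_correct.cases) auto
    have "\<forall>i<length (map root (subs s)). (rule s = BoxR \<and> i = 1 \<longrightarrow> Y (fst (map root (subs s) ! i)) (snd (map root (subs s) ! i))) \<and>
       (\<not>(rule s = BoxR \<and> i = 1) \<longrightarrow> WF Y (fst (map root (subs s) ! i)) (snd (map root (subs s) ! i)))"
    proof (intro allI impI conjI)
      fix i assume il: "i < length (map root (subs s))"
      then have il': "i < length (subs s)" by simp
      have ci: "inf_proof (subs s ! i)" by (rule child_inf[OF isp il'])
      have "provable (root (subs s ! i))" unfolding provable_def using ci by blast
      then show "Y (fst (map root (subs s) ! i)) (snd (map root (subs s) ! i))"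
        if "rule s = BoxR \<and> i = 1" using il' unfolding Y_def by simp
      show "WF Y (fst (map root (subs s) ! i)) (snd (map root (subs s) ! i))"
        if "\<not>(rule s = BoxR \<and> i = 1)" using nn that il' ci unfolding bad_def by auto
    qed
    from step_WF[OF st this] have "WF Y (fst (root s)) (snd (root s))" .
    then show False using bs unfolding bad_def by blast
  qed
  define nx where "nx = (\<lambda>s. SOME i. i<length (subs s) \<and> \<not>(rule s = BoxR \<and> i = 1) \<and> bad (subs s ! i))"
  have nxp: "nx s < length (subs s) \<and> \<not>(rule s = BoxR \<and> nx s = 1) \<and> bad (subs s ! nx s)" if "bad s" for s
    unfolding nx_def using someI_ex[OF nxt[OF that]] by blast
  define f where "f = rec_nat t (\<lambda>k s. subs s ! nx s)"
  have f0: "f 0 = t" unfolding f_def by simp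
  have fS: "f (Suc k) = subs (f k) ! nx (f k)" for k unfolding f_def by simp
  assume "\<not> WF (\<lambda>G D. provable (G, D) \<or> Prov G D) (fst (root t)) (snd (root t))"
  then have b0: "bad t" unfolding bad_def Y_def using t by blast
  have bk: "bad (f k)" for k
    by (induction k) (use b0 f0 fS nxp in auto)
  have "is_branch t f (\<lambda>k. nx (f k))"
    unfolding is_branch_def using f0 fS nxp bk by blast
  then obtain i where "rule (f i) = BoxR \<and> nx (f i) = 1" using t unfolding inf_proof_def by blast
  then show False using nxp[OF bk[of i]] by blast
qed

lemma provable_Prov: "provable (G, D) \<Longrightarrow> Prov G D"
proof (rule Prov.coinduct[of "\<lambda>G D. provable (G, D)"])
  fix G' D' assume "provable (G', D')"
  then obtain t where t: "inf_proof t" "root t = (G', D')" unfolding provable_def by blast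
  have "WF (\<lambda>G D. provable (G, D) \<or> Prov G D) G' D'" using inf_WF[OF t(1)] t(2) by simp
  then show "\<exists>G D. G' = G \<and> D' = D \<and> WF (\<lambda>G D. provable (G, D) \<or> Prov G D) G D" by blast
qed

theorem lemma8p2:
  fixes A :: fm
  shows "(\<forall>\<Gamma> \<Delta>. provable (add_mset A (add_mset A \<Gamma>), \<Delta>) \<longrightarrow> provable (add_mset A \<Gamma>, \<Delta>))
       \<and> (\<forall>\<Gamma> \<Delta>. provable (\<Gamma>, add_mset A (add_mset A \<Delta>)) \<longrightarrow> provable (\<Gamma>, add_mset A \<Delta>))"
  using CLCR_all[of A] unfolding CLp_def CRp_def by (meson Prov_provable provable_Prov)

end
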